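(* Let $\mathcal I=(\Omega,\mathbb P,\mathcal S,\mathcal T,Y)$ be an information structure that satisfies rectangle substitutes, and let $\epsilon=\mathbb E[(\mu_\sigma-\mu_\tau)^2]$. Then $\mathbb E[(\mu_{\sigma\tau}-\mu_\tau)^2]\le 6\epsilon^{1/3}$.
   Context: An information structure is a tuple $\mathcal I=(\Omega,\mathbb P,\mathcal S,\mathcal T,Y)$: a probability space $(\Omega,\mathbb P)$, random variables $\sigma:\Omega\to\mathcal S$ (Alice's signal), $\tau:\Omega\to\mathcal T$ (Bob's signal), and $Y:\Omega\to[0,1]$. Notation: $\mu_{\sigma\tau}=\mathbb E[Y\mid\sigma,\tau]$, $\mu_\sigma=\mathbb E[Y\mid\sigma]$, $\mu_\tau=\mathbb E[Y\mid\tau]$; for measurable $S\subseteq\mathcal S$, $T\subseteq\mathcal T$: $\mu_{\sigma T}=\mathbb E[Y\mid\sigma,\tau\in T]$, $\mu_{S\tau}=\mathbb E[Y\mid\sigma\in S,\tau]$, $\mu_{ST}=\mathbb E[Y\mid\sigma\in S,\tau\in T]$; $\mathbb E[\cdot\mid S,T]$ denotes conditioning on $\{\sigma\in S,\tau\in T\}$. $\mathcal I$ satisfies rectangle substitutes if for all measurable $S\subseteq\mathcal S$, $T\subseteq\mathcal T$ with $\mathbb P(\sigma\in S,\tau\in T)>0$: $\mathbb E[(Y-\mu_{S\tau})^2\mid S,T]-\mathbb E[(Y-\mu_{\sigma\tau})^2\mid S,T]\le \mathbb E[(Y-\mu_{ST})^2\mid S,T]-\mathbb E[(Y-\mu_{\sigma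 T})^2\mid S,T]$. *)

theory Defs
  imports "HOL-Probability.Probability"
begin

definition cexp_rv :: "'w measure \<Rightarrow> ('w \<Rightarrow> 'x) \<Rightarrow> 'x measure \<Rightarrow> ('w \<Rightarrow> real) \<Rightarrow> ('w \<Rightarrow> real)" where
  "cexp_rv M X N Y = real_cond_exp M (vimage_algebra (space M) X N) Y"

definition rect_event :: "'w measure \<Rightarrow> ('w \<Rightarrow> 's) \<Rightarrow> ('w \<Rightarrow> 't) \<Rightarrow> 's set \<Rightarrow> 't set \<Rightarrow> 'w set" where
  "rect_event M sig tau S T = {w \<in> space M. sig w \<in> S \<and> tau w \<in> T}"

text \<open>Conditioning on an event A is done via the conditional probability measure
  uniform_measure M A (i.e. P(. | A)).\<close>
definition rectangle_substitutes ::
  "'w measure \<Rightarrow> 's measure \<Rightarrow> 't measure \<Rightarrow> ('w \<Rightarrow> 's) \<Rightarrow> ('w \<Rightarrow> 't) \<Rightarrow> ('w \<Rightarrow> real) \<Rightarrow> bool" where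
  "rectangle_substitutes M SS TT sig tau Y \<longleftrightarrow>
    (\<forall>S \<in> sets SS. \<forall>T \<in> sets TT. measure M (rect_event M sig tau S T) > 0 \<longrightarrow>
      (let A = rect_event M sig tau S T;
           MA = uniform_measure M A;
           \<mu>\<sigma>\<tau> = cexp_rv M (\<lambda>w. (sig w, tau w)) (SS \<Otimes>\<^sub>M TT) Y;
           \<mu>S\<tau> = cexp_rv (uniform_measure M (rect_event M sig tau S (space TT))) tau TT Y;
           \<mu>\<sigma>T = cexp_rv (uniform_measure M (rect_event M sig tau (space SS) T)) sig SS Y;
           \<mu>ST = (\<integral>w. Y w \<partial>MA)
       in (\<integral>w. (Y w - \<mu>S\<tau> w)\<^sup>2 \<partial>MA) - (\<integral>w. (Y w - \<mu>\<sigma>\<tau> w)\<^sup>2 \<partial>MA)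
          \<le> (\<integral>w. (Y w - \<mu>ST)\<^sup>2 \<partial>MA) - (\<integral>w. (Y w - \<mu>\<sigma>T w)\<^sup>2 \<partial>MA)))"

end

theory Submission
  imports Defs
begin

definition cl :: "real \<Rightarrow> real" where "cl x = max 0 (min 1 x)"

lemma cl_bounds[simp]: "0 \<le> cl x" "cl x \<le> 1"
  by (auto simp: cl_def)

lemma cl_id: "0 \<le> x \<Longrightarrow> x \<le> 1 \<Longrightarrow> cl x = x"
  by (auto simp: cl_def)

lemma cl_abs[simp]: "\<bar>cl x\<bar> \<le> 1"
  by (auto simp: cl_def)

lemma measurable_cl[measurable (raw)]:
  "f \<in> borel_measurable N \<Longrightarrow> (\<lambda>w. cl (f w)) \<in> borel_measurable N"
  unfolding cl_def by (intro borel_measurable_max borel_measurable_min borel_measurable_const) auto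

lemma bint:
  fixes f :: "'a \<Rightarrow> real"
  assumes "prob_space M" "f \<in> borel_measurable M" "\<And>w. w \<in> space M \<Longrightarrow> \<bar>f w\<bar> \<le> B"
  shows "integrable M f"
proof -
  interpret prob_space M by fact
  show ?thesis
    by (rule integrable_const_bound[where 'b=real and B=B]) (use assms in auto)
qed

lemma ce_basic:
  fixes Y :: "'w \<Rightarrow> real"
  assumes P: "prob_space M" and f: "f \<in> M \<rightarrow>\<^sub>M N" and Y[measurable]: "Y \<in> borel_measurable M"
    and Yb: "\<And>w. w \<in> space M \<Longrightarrow> 0 \<le> Y w \<and> Y w \<le> 1"
  shows "sigma_finite_subalgebra M (vimage_algebra (space M) f N)"
    and "AE w in M. real_cond_exp M (vimage_algebra (space M) f N) Y w
                 = cl (real_cond_exp M (vimage_algebra (space M) f N) Y w)"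
    and "(\<lambda>w. cl (real_cond_exp M (vimage_algebra (space M) f N) Y w))
            \<in> borel_measurable (vimage_algebra (space M) f N)"
    and "\<And>h (B::real). h \<in> borel_measurable (vimage_algebra (space M) f N) \<Longrightarrow>
            (\<And>w. w \<in> space M \<Longrightarrow> \<bar>h w\<bar> \<le> B) \<Longrightarrow>
            (\<integral>w. h w * Y w \<partial>M) = (\<integral>w. h w * cl (real_cond_exp M (vimage_algebra (space M) f N) Y w) \<partial>M)"
proof -
  define F where "F = vimage_algebra (space M) f N"
  interpret prob_space M by fact
  have sub: "subalgebra M F"
    unfolding subalgebra_def F_def using sets_image_in_sets[OF refl f] by simp
  interpret finite_measure_subalgebra M F
    by unfold_locales (fact sub)
  show sf: "sigma_finite_subalgebra M (vimage_algebra (space M) f N)"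
    unfolding F_def[symmetric] by unfold_locales
  have iY: "integrable M Y"
    by (rule bint[OF P Y, where B=1]) (use Yb in auto)
  have ge: "AE w in M. real_cond_exp M F Y w \<ge> 0"
    by (rule real_cond_exp_ge_c[OF iY]) (use Yb in auto)
  have le: "AE w in M. real_cond_exp M F Y w \<le> 1"
    by (rule real_cond_exp_le_c[OF iY]) (use Yb in auto)
  have ae: "AE w in M. real_cond_exp M F Y w = cl (real_cond_exp M F Y w)"
    using ge le by eventually_elim (simp add: cl_id)
  then show "AE w in M. real_cond_exp M (vimage_algebra (space M) f N) Y w
                 = cl (real_cond_exp M (vimage_algebra (space M) f N) Y w)"
    by (simp add: F_def)
  show "(\<lambda>w. cl (real_cond_exp M (vimage_algebra (space M) f N) Y w))
            \<in> borel_measurable (vimage_algebra (space M) f N)"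
    unfolding F_def[symmetric] by measurable
  fix h and B :: real assume hm: "h \<in> borel_measurable (vimage_algebra (space M) f N)"
    and hb: "\<And>w. w \<in> space M \<Longrightarrow> \<bar>h w\<bar> \<le> B"
  have hF: "h \<in> borel_measurable F" using hm by (simp add: F_def)
  have hM[measurable]: "h \<in> borel_measurable M" by (rule measurable_from_subalg[OF sub hF])
  have i: "integrable M (\<lambda>w. h w * Y w)"
  proof (rule bint[OF P, where B=B])
    show "(\<lambda>w. h w * Y w) \<in> borel_measurable M" by measurable
    fix w assume w: "w \<in> space M"
    have "\<bar>h w * Y w\<bar> = \<bar>h w\<bar> * \<bar>Y w\<bar>" by (simp add: abs_mult)
    also have "\<dots> \<le> B * 1"
      using hb[OF w] Yb[OF w] by (intro mult_mono) auto
    finally show "\<bar>h w * Y w\<bar> \<le> B" by simp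
  qed
  have "(\<integral>w. h w * Y w \<partial>M) = (\<integral>w. h w * real_cond_exp M F Y w \<partial>M)"
    using real_cond_exp_intg(2)[OF i hF Y] by simp
  also have "\<dots> = (\<integral>w. h w * cl (real_cond_exp M F Y w) \<partial>M)"
    by (rule integral_cong_AE) (use ae in \<open>auto\<close>)
  finally show "(\<integral>w. h w * Y w \<partial>M) = (\<integral>w. h w * cl (real_cond_exp M (vimage_algebra (space M) f N) Y w) \<partial>M)"
    by (simp add: F_def)
qed

lemma um_integral:
  fixes f :: "'a \<Rightarrow> real"
  assumes P: "prob_space M" and A: "A \<in> sets M" and pA: "measure M A > 0"
    and f: "f \<in> borel_measurable M"
  shows "(\<integral>w. f w \<partial>uniform_measure M A) = (\<integral>w. indicator A w * f w \<partial>M) / measure M A"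
proof -
  interpret prob_space M by fact
  have eq: "uniform_measure M A = density M (\<lambda>x. ennreal (indicator A x / measure M A))"
    unfolding uniform_measure_def
    by (intro arg_cong[where f="density M"] ext) (auto simp: emeasure_eq_measure divide_ennreal[symmetric] pA split: split_indicator)
  have "(\<integral>w. f w \<partial>uniform_measure M A) = (\<integral>w. (indicator A w / measure M A) *\<^sub>R f w \<partial>M)"
    unfolding eq by (rule integral_density) (use A f pA in auto)
  also have "\<dots> = (\<integral>w. (1 / measure M A) * (indicator A w * f w) \<partial>M)"
    by (auto intro!: Bochner_Integration.integral_cong)
  also have "\<dots> = (\<integral>w. indicator A w * f w \<partial>M) / measure M A"
    by simp
  finally show ?thesis .
qed

lemma um_space:
  assumes P: "prob_space M"
  shows "uniform_measure M (space M) = M"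
proof (rule measure_eqI)
  interpret prob_space M by fact
  show "sets (uniform_measure M (space M)) = sets M" by simp
  fix B assume B: "B \<in> sets (uniform_measure M (space M))"
  then have B': "B \<in> sets M" by simp
  then have "space M \<inter> B = B" using sets.sets_into_space by auto
  then show "emeasure (uniform_measure M (space M)) B = emeasure M B"
    using B' by (simp add: emeasure_space_1 divide_ennreal_def)
qed

lemma sets_sub_pair:
  assumes sig: "sig \<in> M \<rightarrow>\<^sub>M SS" and tau: "tau \<in> M \<rightarrow>\<^sub>M TT"
  shows "sets (vimage_algebra (space M) sig SS) \<subseteq> sets (vimage_algebra (space M) (\<lambda>w. (sig w, tau w)) (SS \<Otimes>\<^sub>M TT))"
    and "sets (vimage_algebra (space M) tau TT) \<subseteq> sets (vimage_algebra (space M) (\<lambda>w. (sig w, tau w)) (SS \<Otimes>\<^sub>M TT))"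
proof -
  let ?F = "vimage_algebra (space M) (\<lambda>w. (sig w, tau w)) (SS \<Otimes>\<^sub>M TT)"
  have p: "(\<lambda>w. (sig w, tau w)) \<in> measurable ?F (SS \<Otimes>\<^sub>M TT)"
    by (rule measurable_vimage_algebra1) (use measurable_space[OF sig] measurable_space[OF tau] in \<open>auto simp: space_pair_measure\<close>)
  have "(\<lambda>w. fst (sig w, tau w)) \<in> measurable ?F SS"
    by (rule measurable_compose[OF p measurable_fst])
  then have "sig \<in> measurable ?F SS" by simp
  then show "sets (vimage_algebra (space M) sig SS) \<subseteq> sets ?F"
    by (rule sets_image_in_sets[rotated]) simp
  have "(\<lambda>w. snd (sig w, tau w)) \<in> measurable ?F TT"
    by (rule measurable_compose[OF p measurable_snd])
  then have "tau \<in> measurable ?F TT" by simp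
  then show "sets (vimage_algebra (space M) tau TT) \<subseteq> sets ?F"
    by (rule sets_image_in_sets[rotated]) simp
qed

lemma meas_sub:
  assumes "sets F \<subseteq> sets G" "space F = space G" "f \<in> borel_measurable F"
  shows "f \<in> borel_measurable G"
  using measurable_mono[of borel borel F G] assms by auto

lemma abs_mult_le': "\<bar>x\<bar> \<le> a \<Longrightarrow> \<bar>y\<bar> \<le> b \<Longrightarrow> \<bar>x * y\<bar> \<le> a * (b::real)"
  by (simp add: abs_mult mult_mono')
lemma abs_diff_le': "\<bar>x\<bar> \<le> a \<Longrightarrow> \<bar>y\<bar> \<le> b \<Longrightarrow> \<bar>x - y\<bar> \<le> a + (b::real)"
  by linarith
lemma abs_add_le': "\<bar>x\<bar> \<le> a \<Longrightarrow> \<bar>y\<bar> \<le> b \<Longrightarrow> \<bar>x + y\<bar> \<le> a + (b::real)"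
  by linarith
lemma abs_pow2_le': "\<bar>x\<bar> \<le> a \<Longrightarrow> \<bar>x\<^sup>2\<bar> \<le> a * (a::real)"
  by (metis abs_ge_zero abs_mult abs_mult_le' power2_eq_square)
lemma abs_ind_le': "\<bar>indicator A w :: real\<bar> \<le> 1"
  by (simp split: split_indicator)

lemma cell:
  fixes M :: "'w measure" and SS :: "'s measure" and TT :: "'t measure"
    and sig :: "'w \<Rightarrow> 's" and tau :: "'w \<Rightarrow> 't" and Y :: "'w \<Rightarrow> real"
  assumes P: "prob_space M" and sig: "sig \<in> M \<rightarrow>\<^sub>M SS" and tau: "tau \<in> M \<rightarrow>\<^sub>M TT"
    and Ym[measurable]: "Y \<in> borel_measurable M" and Yb: "\<And>w. w \<in> space M \<Longrightarrow> 0 \<le> Y w \<and> Y w \<le> 1"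
    and RS: "rectangle_substitutes M SS TT sig tau Y"
    and S: "S \<in> sets SS" and pA: "measure M (sig -` S \<inter> space M) > 0"
    and lo: "\<And>w. w \<in> sig -` S \<inter> space M \<Longrightarrow> lo \<le> cl (cexp_rv M sig SS Y w) \<and> cl (cexp_rv M sig SS Y w) \<le> lo + \<delta>"
  shows "(\<integral>w. indicator (sig -` S \<inter> space M) w *
            (cl (cexp_rv M (\<lambda>w. (sig w, tau w)) (SS \<Otimes>\<^sub>M TT) Y w)
             - cl (cexp_rv (uniform_measure M (sig -` S \<inter> space M)) tau TT Y w))\<^sup>2 \<partial>M)
         \<le> \<delta>\<^sup>2 * measure M (sig -` S \<inter> space M)"
proof -
  interpret prob_space M by fact
  define A where "A = sig -` S \<inter> space M"
  define MA where "MA = uniform_measure M A"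
  define Fs where "Fs = vimage_algebra (space M) sig SS"
  define Ft where "Ft = vimage_algebra (space M) tau TT"
  define Fp where "Fp = vimage_algebra (space M) (\<lambda>w. (sig w, tau w)) (SS \<Otimes>\<^sub>M TT)"
  define Xr where "Xr = cexp_rv M sig SS Y"
  define Wr where "Wr = cexp_rv M (\<lambda>w. (sig w, tau w)) (SS \<Otimes>\<^sub>M TT) Y"
  define Vr where "Vr = cexp_rv MA tau TT Y"
  define X where "X = (\<lambda>w. cl (Xr w))"
  define W where "W = (\<lambda>w. cl (Wr w))"
  define V where "V = (\<lambda>w. cl (Vr w))"
  define c where "c = (\<integral>w. Y w \<partial>MA)"
  define p where "p = measure M A"
  have p0: "p > 0" using pA by (simp add: p_def A_def)
  have AFs: "A \<in> sets Fs" unfolding A_def Fs_def by (rule in_vimage_algebra[OF S])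
  have AM[measurable]: "A \<in> sets M" unfolding A_def using sig S by measurable
  have PMA: "prob_space MA" unfolding MA_def
    by (rule prob_space_uniform_measure) (use p0 in \<open>auto simp: emeasure_eq_measure p_def\<close>)
  have pair: "(\<lambda>w. (sig w, tau w)) \<in> M \<rightarrow>\<^sub>M SS \<Otimes>\<^sub>M TT"
    using sig tau by measurable
  have sFsp: "sets Fs \<subseteq> sets Fp" and sFtp: "sets Ft \<subseteq> sets Fp"
    using sets_sub_pair[OF sig tau] by (auto simp: Fs_def Ft_def Fp_def)
  note ceX = ce_basic[OF P sig Ym Yb, folded Fs_def]
  note ceW = ce_basic[OF P pair Ym Yb, folded Fp_def]
  have tauMA: "tau \<in> MA \<rightarrow>\<^sub>M TT" using tau by (simp add: MA_def measurable_def)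
  have YMA: "Y \<in> borel_measurable MA" using Ym by (simp add: MA_def measurable_def)
  note ceV = ce_basic[OF PMA tauMA YMA, unfolded MA_def space_uniform_measure, folded MA_def Ft_def]
  have Xm: "X \<in> borel_measurable Fs" using ceX(3) by (simp add: X_def Xr_def cexp_rv_def Fs_def)
  have Wm: "W \<in> borel_measurable Fp" using ceW(3) by (simp add: W_def Wr_def cexp_rv_def Fp_def)
  have Vm: "V \<in> borel_measurable Ft" using ceV(3) Yb by (simp add: V_def Vr_def cexp_rv_def MA_def Ft_def)
  have XmM[measurable]: "X \<in> borel_measurable M"
    by (rule measurable_from_subalg[OF _ Xm]) (use sets_image_in_sets[OF refl sig] in \<open>auto simp: subalgebra_def Fs_def\<close>)
  have WmM[measurable]: "W \<in> borel_measurable M"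
    by (rule measurable_from_subalg[OF _ Wm]) (use sets_image_in_sets[OF refl pair] in \<open>auto simp: subalgebra_def Fp_def\<close>)
  have VmM[measurable]: "V \<in> borel_measurable M"
    by (rule measurable_from_subalg[OF _ Vm]) (use sets_image_in_sets[OF refl tau] in \<open>auto simp: subalgebra_def Ft_def\<close>)
  have XrM[measurable]: "Xr \<in> borel_measurable M" by (simp add: Xr_def cexp_rv_def)
  have WrM[measurable]: "Wr \<in> borel_measurable M" by (simp add: Wr_def cexp_rv_def)
  have VrM[measurable]: "Vr \<in> borel_measurable M"
    using borel_measurable_cond_exp2[of MA] by (simp add: Vr_def cexp_rv_def MA_def measurable_def)
  have aeX: "AE w in M. Xr w = X w" using ceX(2) by (simp add: X_def Xr_def cexp_rv_def Fs_def)
  have aeW: "AE w in M. Wr w = W w" using ceW(2) by (simp add: W_def Wr_def cexp_rv_def Fp_def)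
  have aeV: "AE w in MA. Vr w = V w" using ceV(2) Yb by (simp add: V_def Vr_def cexp_rv_def MA_def Ft_def)
  have aeXA: "AE w in MA. Xr w = X w" unfolding MA_def
    by (rule AE_uniform_measureI[OF AM]) (use aeX in auto)
  have aeWA: "AE w in MA. Wr w = W w" unfolding MA_def
    by (rule AE_uniform_measureI[OF AM]) (use aeW in auto)
  have r1: "rect_event M sig tau S (space TT) = A"
    unfolding rect_event_def A_def using measurable_space[OF tau] by auto
  have r2: "rect_event M sig tau (space SS) (space TT) = space M"
    unfolding rect_event_def using measurable_space[OF tau] measurable_space[OF sig] by auto
  have RS1: "(\<integral>w. (Y w - Vr w)\<^sup>2 \<partial>MA) - (\<integral>w. (Y w - Wr w)\<^sup>2 \<partial>MA)
        \<le> (\<integral>w. (Y w - c)\<^sup>2 \<partial>MA) - (\<integral>w. (Y w - Xr w)\<^sup>2 \<partial>MA)"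
  proof -
    have pos: "0 < measure M (rect_event M sig tau S (space TT))"
      using pA r1 by (simp add: A_def)
    note H0 = RS[unfolded rectangle_substitutes_def, THEN bspec, OF S, THEN bspec, OF sets.top, THEN mp, OF pos]
    show ?thesis using H0 unfolding Let_def r1 r2 um_space[OF P]
      by (simp add: A_def MA_def Vr_def Wr_def c_def Xr_def)
  qed
  have RS2: "(\<integral>w. (Y w - V w)\<^sup>2 \<partial>MA) - (\<integral>w. (Y w - W w)\<^sup>2 \<partial>MA)
        \<le> (\<integral>w. (Y w - c)\<^sup>2 \<partial>MA) - (\<integral>w. (Y w - X w)\<^sup>2 \<partial>MA)"
  proof -
    have "(\<integral>w. (Y w - Vr w)\<^sup>2 \<partial>MA) = (\<integral>w. (Y w - V w)\<^sup>2 \<partial>MA)"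
      by (rule integral_cong_AE) (use aeV in \<open>auto simp: MA_def\<close>)
    moreover have "(\<integral>w. (Y w - Wr w)\<^sup>2 \<partial>MA) = (\<integral>w. (Y w - W w)\<^sup>2 \<partial>MA)"
      by (rule integral_cong_AE) (use aeWA in \<open>auto simp: MA_def\<close>)
    moreover have "(\<integral>w. (Y w - Xr w)\<^sup>2 \<partial>MA) = (\<integral>w. (Y w - X w)\<^sup>2 \<partial>MA)"
      by (rule integral_cong_AE) (use aeXA in \<open>auto simp: MA_def\<close>)
    ultimately show ?thesis using RS1 by simp
  qed
  have bY: "\<And>w. w \<in> space M \<Longrightarrow> \<bar>Y w\<bar> \<le> 1" using Yb by fastforce
  have bX: "\<And>w. \<bar>X w\<bar> \<le> 1" and bW: "\<And>w. \<bar>W w\<bar> \<le> 1" and bV: "\<And>w. \<bar>V w\<bar> \<le> 1"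
    by (simp_all add: X_def W_def V_def)
  note bnd = abs_mult_le' abs_diff_le' abs_add_le' abs_pow2_le' abs_ind_le' bX bW bV
  have cv: "\<And>g. g \<in> borel_measurable M \<Longrightarrow> (\<integral>w. g w \<partial>MA) = (\<integral>w. indicator A w * g w \<partial>M) / p"
    unfolding MA_def p_def by (rule um_integral[OF P AM]) (use p0 in \<open>simp add: p_def\<close>)
  define I1 where "I1 = (\<integral>w. indicator A w * (Y w - V w)\<^sup>2 \<partial>M)"
  define I2 where "I2 = (\<integral>w. indicator A w * (Y w - W w)\<^sup>2 \<partial>M)"
  define I3 where "I3 = (\<integral>w. indicator A w * (Y w - c)\<^sup>2 \<partial>M)"
  define I4 where "I4 = (\<integral>w. indicator A w * (Y w - X w)\<^sup>2 \<partial>M)"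
  have RS3: "I1 - I2 \<le> I3 - I4"
  proof -
    have "I1 / p - I2 / p \<le> I3 / p - I4 / p"
      using RS2 unfolding I1_def I2_def I3_def I4_def
      by (subst (asm) (1 2 3 4) cv) (auto simp: V_def W_def X_def)
    then have "(I1 - I2) / p \<le> (I3 - I4) / p" by (simp add: diff_divide_distrib)
    then show ?thesis using p0 by (simp add: divide_le_cancel)
  qed
  have indFp: "indicator A \<in> borel_measurable Fp"
    using AFs sFsp by (intro borel_measurable_indicator) auto
  have indFs: "indicator A \<in> borel_measurable Fs"
    using AFs by (intro borel_measurable_indicator) auto
  have VFp: "V \<in> borel_measurable Fp"
    by (rule meas_sub[OF sFtp _ Vm]) (simp add: Ft_def Fp_def)
  have XFp: "X \<in> borel_measurable Fp"
    by (rule meas_sub[OF sFsp _ Xm]) (simp add: Fs_def Fp_def)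
  have Weq: "\<And>w. cl (real_cond_exp M Fp Y w) = W w" by (simp add: W_def Wr_def cexp_rv_def Fp_def)
  have Xeq: "\<And>w. cl (real_cond_exp M Fs Y w) = X w" by (simp add: X_def Xr_def cexp_rv_def Fs_def)
  define h1 where "h1 = (\<lambda>w. indicator A w * (W w - V w))"
  define h2 where "h2 = (\<lambda>w. indicator A w * (X w - c))"
  have h1m: "h1 \<in> borel_measurable Fp" unfolding h1_def using indFp Wm VFp by measurable
  have h2m: "h2 \<in> borel_measurable Fs" unfolding h2_def using indFs Xm by measurable
  have O1: "(\<integral>w. h1 w * Y w \<partial>M) = (\<integral>w. h1 w * W w \<partial>M)"
  proof -
    have "(\<integral>w. h1 w * Y w \<partial>M) = (\<integral>w. h1 w * cl (real_cond_exp M Fp Y w) \<partial>M)"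
    proof (rule ceW(4)[where B=2])
      show "h1 \<in> borel_measurable Fp" by (rule h1m)
      fix w show "\<bar>h1 w\<bar> \<le> 2" unfolding h1_def
        using abs_mult_le'[OF abs_ind_le' abs_diff_le'[OF bW bV]] by simp
    qed auto
    then show ?thesis unfolding Weq .
  qed
  have O2: "(\<integral>w. h2 w * Y w \<partial>M) = (\<integral>w. h2 w * X w \<partial>M)"
  proof -
    have "(\<integral>w. h2 w * Y w \<partial>M) = (\<integral>w. h2 w * cl (real_cond_exp M Fs Y w) \<partial>M)"
    proof (rule ceX(4)[where B="1 + \<bar>c\<bar>"])
      show "h2 \<in> borel_measurable Fs" by (rule h2m)
      fix w show "\<bar>h2 w\<bar> \<le> 1 + \<bar>c\<bar>" unfolding h2_def
        using abs_mult_le'[OF abs_ind_le' abs_diff_le'[OF bX order_refl[of "\<bar>c\<bar>"]]] by simp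
    qed auto
    then show ?thesis unfolding Xeq .
  qed
  have O3: "(\<integral>w. indicator A w * Y w \<partial>M) = (\<integral>w. indicator A w * X w \<partial>M)"
  proof -
    have "(\<integral>w. indicator A w * Y w \<partial>M) = (\<integral>w. indicator A w * cl (real_cond_exp M Fs Y w) \<partial>M)"
    proof (rule ceX(4)[where B=1])
      show "indicator A \<in> borel_measurable Fs" by (rule indFs)
    qed (auto simp: abs_ind_le')
    then show ?thesis unfolding Xeq .
  qed
  have h1M[measurable]: "h1 \<in> borel_measurable M" and h2M[measurable]: "h2 \<in> borel_measurable M"
    unfolding h1_def h2_def by measurable
  have ints0: "integrable M (\<lambda>w. indicator A w * (Y w - V w)\<^sup>2)"
    unfolding h1_def h2_def by (rule bint[OF P]; (measurable)?) (rule bnd bY order_refl | assumption)+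
  have ints1: "integrable M (\<lambda>w. indicator A w * (Y w - W w)\<^sup>2)"
    unfolding h1_def h2_def by (rule bint[OF P]; (measurable)?) (rule bnd bY order_refl | assumption)+
  have ints2: "integrable M (\<lambda>w. indicator A w * (W w - V w)\<^sup>2)"
    unfolding h1_def h2_def by (rule bint[OF P]; (measurable)?) (rule bnd bY order_refl | assumption)+
  have ints3: "integrable M (\<lambda>w. indicator A w * (Y w - c)\<^sup>2)"
    unfolding h1_def h2_def by (rule bint[OF P]; (measurable)?) (rule bnd bY order_refl | assumption)+
  have ints4: "integrable M (\<lambda>w. indicator A w * (Y w - X w)\<^sup>2)"
    unfolding h1_def h2_def by (rule bint[OF P]; (measurable)?) (rule bnd bY order_refl | assumption)+
  have ints5: "integrable M (\<lambda>w. indicator A w * (X w - c)\<^sup>2)"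
    unfolding h1_def h2_def by (rule bint[OF P]; (measurable)?) (rule bnd bY order_refl | assumption)+
  have ints6: "integrable M (\<lambda>w. h1 w * Y w)"
    unfolding h1_def h2_def by (rule bint[OF P]; (measurable)?) (rule bnd bY order_refl | assumption)+
  have ints7: "integrable M (\<lambda>w. h1 w * W w)"
    unfolding h1_def h2_def by (rule bint[OF P]; (measurable)?) (rule bnd bY order_refl | assumption)+
  have ints8: "integrable M (\<lambda>w. h2 w * Y w)"
    unfolding h1_def h2_def by (rule bint[OF P]; (measurable)?) (rule bnd bY order_refl | assumption)+
  have ints9: "integrable M (\<lambda>w. h2 w * X w)"
    unfolding h1_def h2_def by (rule bint[OF P]; (measurable)?) (rule bnd bY order_refl | assumption)+
  have ints10: "integrable M (\<lambda>w. indicator A w * X w)"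
    unfolding h1_def h2_def by (rule bint[OF P]; (measurable)?) (rule bnd bY order_refl | assumption)+
  have ints11: "integrable M (\<lambda>w. indicator A w * Y w)"
    unfolding h1_def h2_def by (rule bint[OF P]; (measurable)?) (rule bnd bY order_refl | assumption)+
  note ints = ints0 ints1 ints2 ints3 ints4 ints5 ints6 ints7 ints8 ints9 ints10 ints11
  have E1: "I1 - I2 = (\<integral>w. indicator A w * (W w - V w)\<^sup>2 \<partial>M)"
  proof -
    have "I1 = (\<integral>w. indicator A w * (Y w - W w)\<^sup>2 + indicator A w * (W w - V w)\<^sup>2
                 + 2 * (h1 w * Y w) - 2 * (h1 w * W w) \<partial>M)"
      unfolding I1_def h1_def
      by (intro Bochner_Integration.integral_cong refl) (simp add: power2_eq_square algebra_simps)
    also have "\<dots> = I2 + (\<integral>w. indicator A w * (W w - V w)\<^sup>2 \<partial>M)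
                 + 2 * (\<integral>w. h1 w * Y w \<partial>M) - 2 * (\<integral>w. h1 w * W w \<partial>M)"
      unfolding I2_def using ints by simp
    finally show ?thesis using O1 by simp
  qed
  have E2: "I3 - I4 = (\<integral>w. indicator A w * (X w - c)\<^sup>2 \<partial>M)"
  proof -
    have "I3 = (\<integral>w. indicator A w * (Y w - X w)\<^sup>2 + indicator A w * (X w - c)\<^sup>2
                 + 2 * (h2 w * Y w) - 2 * (h2 w * X w) \<partial>M)"
      unfolding I3_def h2_def
      by (intro Bochner_Integration.integral_cong refl) (simp add: power2_eq_square algebra_simps)
    also have "\<dots> = I4 + (\<integral>w. indicator A w * (X w - c)\<^sup>2 \<partial>M)
                 + 2 * (\<integral>w. h2 w * Y w \<partial>M) - 2 * (\<integral>w. h2 w * X w \<partial>M)"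
      unfolding I4_def using ints by simp
    finally show ?thesis using O2 by simp
  qed
  have iAk: "\<And>k::real. integrable M (\<lambda>w. indicator A w * k)"
    by (rule bint[OF P]; (measurable)?) (rule bnd bY order_refl | assumption)+
  have cp: "c * p = (\<integral>w. indicator A w * X w \<partial>M)"
    using cv[OF Ym] O3 p0 by (simp add: c_def)
  have c_lo: "lo \<le> c"
  proof -
    have "lo * p = (\<integral>w. indicator A w * lo \<partial>M)" by (simp add: p_def)
    also have "\<dots> \<le> (\<integral>w. indicator A w * X w \<partial>M)"
      by (rule integral_mono) (use ints iAk lo in \<open>auto simp: A_def X_def Xr_def split: split_indicator\<close>)
    finally show ?thesis using cp p0 by (metis mult_le_cancel_right_pos)
  qed
  have c_hi: "c \<le> lo + \<delta>"
  proof -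
    have "(\<integral>w. indicator A w * X w \<partial>M) \<le> (\<integral>w. indicator A w * (lo + \<delta>) \<partial>M)"
      by (rule integral_mono) (use ints iAk lo in \<open>auto simp: A_def X_def Xr_def split: split_indicator\<close>)
    also have "\<dots> = (lo + \<delta>) * p" by (simp add: p_def)
    finally show ?thesis using cp p0 by (metis mult_le_cancel_right_pos)
  qed
  have K: "(\<integral>w. indicator A w * (X w - c)\<^sup>2 \<partial>M) \<le> (\<integral>w. indicator A w * \<delta>\<^sup>2 \<partial>M)"
  proof (rule integral_mono)
    show "integrable M (\<lambda>w. indicator A w * \<delta>\<^sup>2)" by (rule iAk)
    fix w assume "w \<in> space M"
    show "indicator A w * (X w - c)\<^sup>2 \<le> indicator A w * \<delta>\<^sup>2"
    proof (cases "w \<in> A")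
      case True
      with lo[of w] have "lo \<le> X w" "X w \<le> lo + \<delta>" by (auto simp: A_def X_def Xr_def)
      then have "\<bar>X w - c\<bar> \<le> \<delta>" using c_lo c_hi by linarith
      then have "\<bar>X w - c\<bar>\<^sup>2 \<le> \<delta>\<^sup>2" by (intro power_mono) auto
      then show ?thesis using True by simp
    qed simp
  qed (use ints in auto)
  have "(\<integral>w. indicator A w * (W w - V w)\<^sup>2 \<partial>M) \<le> \<delta>\<^sup>2 * p"
    using E1 E2 RS3 K by (simp add: p_def mult.commute)
  then show ?thesis
    by (simp add: W_def V_def Wr_def Vr_def MA_def A_def p_def)
qed

lemma sum_ind_pick:
  fixes f :: "int \<Rightarrow> real"
  assumes "finite K" "c \<in> K"
  shows "(\<Sum>k\<in>K. (if c = k then 1 else 0) * f k) = f c"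
proof -
  have "(\<Sum>k\<in>K. (if c = k then 1 else 0) * f k) = (\<Sum>k\<in>K. if c = k then f k else 0)"
    by (intro sum.cong) auto
  also have "\<dots> = f c" using assms by simp
  finally show ?thesis .
qed

lemma core:
  fixes M :: "'w measure" and SS :: "'s measure" and TT :: "'t measure"
    and sig :: "'w \<Rightarrow> 's" and tau :: "'w \<Rightarrow> 't" and Y :: "'w \<Rightarrow> real"
  assumes P: "prob_space M" and sig: "sig \<in> M \<rightarrow>\<^sub>M SS" and tau: "tau \<in> M \<rightarrow>\<^sub>M TT"
    and Ym[measurable]: "Y \<in> borel_measurable M" and Yb: "\<And>w. w \<in> space M \<Longrightarrow> 0 \<le> Y w \<and> Y w \<le> 1"
    and RS: "rectangle_substitutes M SS TT sig tau Y"
    and d: "\<delta> > 0"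
  shows "(\<integral>w. (cl (cexp_rv M (\<lambda>w. (sig w, tau w)) (SS \<Otimes>\<^sub>M TT) Y w) - cl (cexp_rv M tau TT Y w))\<^sup>2 \<partial>M)
    \<le> 2 * \<delta>\<^sup>2 + 2 * measure M {w \<in> space M. \<lfloor>(cl (cexp_rv M sig SS Y w) - u) / \<delta>\<rfloor> \<noteq> \<lfloor>(cl (cexp_rv M tau TT Y w) - u) / \<delta>\<rfloor>}"
proof -
  interpret prob_space M by fact
  define Fs where "Fs = vimage_algebra (space M) sig SS"
  define Ft where "Ft = vimage_algebra (space M) tau TT"
  define Fp where "Fp = vimage_algebra (space M) (\<lambda>w. (sig w, tau w)) (SS \<Otimes>\<^sub>M TT)"
  define X where "X = (\<lambda>w. cl (cexp_rv M sig SS Y w))"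
  define Z where "Z = (\<lambda>w. cl (cexp_rv M tau TT Y w))"
  define W where "W = (\<lambda>w. cl (cexp_rv M (\<lambda>w. (sig w, tau w)) (SS \<Otimes>\<^sub>M TT) Y w))"
  define C where "C = (\<lambda>w. \<lfloor>(X w - u) / \<delta>\<rfloor>)"
  define D where "D = (\<lambda>w. \<lfloor>(Z w - u) / \<delta>\<rfloor>)"
  define K where "K = {\<lfloor>(0 - u) / \<delta>\<rfloor> .. \<lfloor>(1 - u) / \<delta>\<rfloor>}"
  define A where "A = (\<lambda>k. {w \<in> space M. C w = k})"
  define B where "B = (\<lambda>k. {w \<in> space M. D w = k})"
  define Vf where "Vf = (\<lambda>k w. cl (cexp_rv (uniform_measure M (A k)) tau TT Y w))"
  define V where "V = (\<lambda>w. \<Sum>k\<in>K. indicator (A k) w * Vf k w)"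
  define G where "G = (\<lambda>w. \<Sum>k\<in>K. indicator (B k) w * Vf k w)"
  define Cr where "Cr = {w \<in> space M. C w \<noteq> D w}"
  have finK: "finite K" by (simp add: K_def)
  have pair: "(\<lambda>w. (sig w, tau w)) \<in> M \<rightarrow>\<^sub>M SS \<Otimes>\<^sub>M TT"
    using sig tau by measurable
  have sFsp: "sets Fs \<subseteq> sets Fp" and sFtp: "sets Ft \<subseteq> sets Fp"
    using sets_sub_pair[OF sig tau] by (auto simp: Fs_def Ft_def Fp_def)
  note ceX = ce_basic[OF P sig Ym Yb, folded Fs_def]
  note ceZ = ce_basic[OF P tau Ym Yb, folded Ft_def]
  note ceW = ce_basic[OF P pair Ym Yb, folded Fp_def]
  have Xm: "X \<in> borel_measurable Fs" using ceX(3) by (simp add: X_def cexp_rv_def Fs_def)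
  have Zm: "Z \<in> borel_measurable Ft" using ceZ(3) by (simp add: Z_def cexp_rv_def Ft_def)
  have Wm: "W \<in> borel_measurable Fp" using ceW(3) by (simp add: W_def cexp_rv_def Fp_def)
  have subs: "subalgebra M Fs" "subalgebra M Ft" "subalgebra M Fp"
    using sets_image_in_sets[OF refl sig] sets_image_in_sets[OF refl tau] sets_image_in_sets[OF refl pair]
    by (auto simp: subalgebra_def Fs_def Ft_def Fp_def)
  have XM[measurable]: "X \<in> borel_measurable M" by (rule measurable_from_subalg[OF subs(1) Xm])
  have ZM[measurable]: "Z \<in> borel_measurable M" by (rule measurable_from_subalg[OF subs(2) Zm])
  have WM[measurable]: "W \<in> borel_measurable M" by (rule measurable_from_subalg[OF subs(3) Wm])
  have Vfm: "\<And>k. Vf k \<in> borel_measurable Ft"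
  proof -
    fix k
    have "(\<lambda>w. cl (real_cond_exp (uniform_measure M (A k)) (vimage_algebra (space (uniform_measure M (A k))) tau TT) Y w))
       \<in> borel_measurable (vimage_algebra (space (uniform_measure M (A k))) tau TT)"
      by measurable
    then show "Vf k \<in> borel_measurable Ft" by (simp add: Vf_def Ft_def cexp_rv_def)
  qed
  have VfM[measurable]: "\<And>k. Vf k \<in> borel_measurable M" by (rule measurable_from_subalg[OF subs(2) Vfm])
  have bX: "\<And>w. 0 \<le> X w \<and> X w \<le> 1" and bZ: "\<And>w. 0 \<le> Z w \<and> Z w \<le> 1"
    and bW: "\<And>w. 0 \<le> W w \<and> W w \<le> 1" and bVf: "\<And>k w. 0 \<le> Vf k w \<and> Vf k w \<le> 1"
    by (simp_all add: X_def Z_def W_def Vf_def)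
  have inK: "\<And>x. 0 \<le> x \<Longrightarrow> x \<le> 1 \<Longrightarrow> \<lfloor>(x - u) / \<delta>\<rfloor> \<in> K"
  proof -
    fix x :: real assume x: "0 \<le> x" "x \<le> 1"
    have "(0 - u) / \<delta> \<le> (x - u) / \<delta>" "(x - u) / \<delta> \<le> (1 - u) / \<delta>"
      using x d by (simp_all only: divide_right_mono diff_right_mono less_imp_le)
    then show "\<lfloor>(x - u) / \<delta>\<rfloor> \<in> K" unfolding K_def by (auto intro!: floor_mono)
  qed
  have CK: "\<And>w. C w \<in> K" and DK: "\<And>w. D w \<in> K"
    using bX bZ inK unfolding C_def D_def by auto
  have AFs: "\<And>k. A k \<in> sets Fs"
  proof -
    fix k
    have "{w \<in> space Fs. C w = k} \<in> sets Fs" unfolding C_def using Xm by measurable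
    then show "A k \<in> sets Fs" by (simp add: A_def Fs_def)
  qed
  have BFt: "\<And>k. B k \<in> sets Ft"
  proof -
    fix k
    have "{w \<in> space Ft. D w = k} \<in> sets Ft" unfolding D_def using Zm by measurable
    then show "B k \<in> sets Ft" by (simp add: B_def Ft_def)
  qed
  have AM[measurable]: "\<And>k. A k \<in> sets M" using AFs subs(1) by (auto simp: subalgebra_def)
  have BM[measurable]: "\<And>k. B k \<in> sets M" using BFt subs(2) by (auto simp: subalgebra_def)
  have indA: "\<And>k w. w \<in> space M \<Longrightarrow> indicator (A k) w = (if C w = k then 1 else (0::real))"
    by (auto simp: A_def split: split_indicator)
  have indB: "\<And>k w. w \<in> space M \<Longrightarrow> indicator (B k) w = (if D w = k then 1 else (0::real))"
    by (auto simp: B_def split: split_indicator)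
  have Vpt: "\<And>w. w \<in> space M \<Longrightarrow> V w = Vf (C w) w"
    unfolding V_def using sum_ind_pick[OF finK CK, of _ "\<lambda>k. Vf k _"] by (simp add: indA)
  have Gpt: "\<And>w. w \<in> space M \<Longrightarrow> G w = Vf (D w) w"
    unfolding G_def using sum_ind_pick[OF finK DK, of _ "\<lambda>k. Vf k _"] by (simp add: indB)
  have VM[measurable]: "V \<in> borel_measurable M" unfolding V_def by measurable
  have GFt: "G \<in> borel_measurable Ft" unfolding G_def
    using BFt Vfm by (intro borel_measurable_sum borel_measurable_times borel_measurable_indicator) auto
  have GM[measurable]: "G \<in> borel_measurable M" by (rule measurable_from_subalg[OF subs(2) GFt])
  have CrM[measurable]: "Cr \<in> sets M" unfolding Cr_def C_def D_def by measurable
  have aX: "\<And>w. \<bar>X w\<bar> \<le> 1" and aZ: "\<And>w. \<bar>Z w\<bar> \<le> 1" and aW: "\<And>w. \<bar>W w\<bar> \<le> 1"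
    and aVf: "\<And>k w. \<bar>Vf k w\<bar> \<le> 1"
    by (simp_all add: X_def Z_def W_def Vf_def)
  have bV: "\<And>w. w \<in> space M \<Longrightarrow> 0 \<le> V w \<and> V w \<le> 1" using Vpt bVf by simp
  have bG: "\<And>w. w \<in> space M \<Longrightarrow> 0 \<le> G w \<and> G w \<le> 1" using Gpt bVf by simp
  have aV: "\<And>w. w \<in> space M \<Longrightarrow> \<bar>V w\<bar> \<le> 1" using bV by fastforce
  have aG: "\<And>w. w \<in> space M \<Longrightarrow> \<bar>G w\<bar> \<le> 1" using bG by fastforce
  note bnd = abs_mult_le' abs_diff_le' abs_add_le' abs_pow2_le' abs_ind_le' aX aZ aW aVf aV aG
  have cellk: "\<And>k. (\<integral>w. indicator (A k) w * (W w - Vf k w)\<^sup>2 \<partial>M) \<le> \<delta>\<^sup>2 * measure M (A k)"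
  proof -
    fix k
    show "(\<integral>w. indicator (A k) w * (W w - Vf k w)\<^sup>2 \<partial>M) \<le> \<delta>\<^sup>2 * measure M (A k)"
    proof (cases "measure M (A k) > 0")
      case True
      have "A k \<in> {sig -` S \<inter> space M | S. S \<in> sets SS}"
        using AFs[of k] sets_vimage_algebra2[of sig "space M" SS] measurable_space[OF sig]
        by (auto simp: Fs_def)
      then obtain S where S: "S \<in> sets SS" and AS: "A k = sig -` S \<inter> space M" by auto
      have lo: "\<And>w. w \<in> sig -` S \<inter> space M \<Longrightarrow> u + real_of_int k * \<delta> \<le> cl (cexp_rv M sig SS Y w)
                 \<and> cl (cexp_rv M sig SS Y w) \<le> u + real_of_int k * \<delta> + \<delta>"
      proof -
        fix w assume "w \<in> sig -` S \<inter> space M"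
        then have "C w = k" unfolding AS[symmetric] by (simp add: A_def)
        then have "real_of_int k \<le> (X w - u) / \<delta>" "(X w - u) / \<delta> < real_of_int k + 1"
          unfolding C_def by (simp_all add: floor_eq_iff)
        then have "real_of_int k * \<delta> \<le> X w - u" "X w - u < (real_of_int k + 1) * \<delta>"
          using d by (simp_all add: le_divide_eq divide_less_eq)
        then show "u + real_of_int k * \<delta> \<le> cl (cexp_rv M sig SS Y w)
                 \<and> cl (cexp_rv M sig SS Y w) \<le> u + real_of_int k * \<delta> + \<delta>"
          by (simp add: X_def algebra_simps)
      qed
      have "measure M (sig -` S \<inter> space M) > 0" using True AS by simp
      from cell[OF P sig tau Ym Yb RS S this lo] show ?thesis
        by (simp add: AS[symmetric] W_def Vf_def)
    next
      case False
      then have m0: "measure M (A k) = 0" using measure_nonneg[of M "A k"] by linarith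
      have "(\<integral>w. indicator (A k) w * (W w - Vf k w)\<^sup>2 \<partial>M) \<le> (\<integral>w. indicator (A k) w \<partial>M)"
      proof (rule integral_mono)
        show "integrable M (\<lambda>w. indicator (A k) w * (W w - Vf k w)\<^sup>2)"
          by (rule bint[OF P]; (measurable)?) (rule bnd | assumption)+
        show "integrable M (indicator (A k) :: 'w \<Rightarrow> real)"
          by (rule bint[OF P]; (measurable)?) (rule bnd | assumption)+
        fix w
        have "(W w - Vf k w)\<^sup>2 \<le> 1" using bW[of w] bVf[of k w] by (simp add: abs_square_le_1 abs_le_iff)
        then show "indicator (A k) w * (W w - Vf k w)\<^sup>2 \<le> indicator (A k) w"
          by (simp split: split_indicator)
      qed
      then show ?thesis using m0 by simp
    qed
  qed
  have intA: "\<And>k. integrable M (\<lambda>w. indicator (A k) w * (W w - Vf k w)\<^sup>2)"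
    by (rule bint[OF P]; (measurable)?) (rule bnd | assumption)+
  have sumA: "(\<Sum>k\<in>K. measure M (A k)) = 1"
  proof -
    have "(\<Sum>k\<in>K. measure M (A k)) = (\<Sum>k\<in>K. (\<integral>w. indicator (A k) w \<partial>M))" by simp
    also have "\<dots> = (\<integral>w. (\<Sum>k\<in>K. indicator (A k) w) \<partial>M)"
      by (rule Bochner_Integration.integral_sum[symmetric]) (rule bint[OF P]; (measurable)?; (rule bnd | assumption)+)
    also have "\<dots> = (\<integral>w. 1 \<partial>M)"
    proof (rule Bochner_Integration.integral_cong[OF refl])
      fix w assume w: "w \<in> space M"
      show "(\<Sum>k\<in>K. indicator (A k) w) = (1::real)"
        using sum_ind_pick[OF finK CK, of w "\<lambda>_. 1"] by (simp add: indA[OF w])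
    qed
    finally show ?thesis by (simp add: prob_space)
  qed
  have WV: "(\<integral>w. (W w - V w)\<^sup>2 \<partial>M) \<le> \<delta>\<^sup>2"
  proof -
    have "(\<integral>w. (W w - V w)\<^sup>2 \<partial>M) = (\<integral>w. (\<Sum>k\<in>K. indicator (A k) w * (W w - Vf k w)\<^sup>2) \<partial>M)"
    proof (rule Bochner_Integration.integral_cong[OF refl])
      fix w assume w: "w \<in> space M"
      show "(W w - V w)\<^sup>2 = (\<Sum>k\<in>K. indicator (A k) w * (W w - Vf k w)\<^sup>2)"
        using sum_ind_pick[OF finK CK, of w "\<lambda>k. (W w - Vf k w)\<^sup>2"] by (simp add: indA[OF w] Vpt[OF w])
    qed
    also have "\<dots> = (\<Sum>k\<in>K. (\<integral>w. indicator (A k) w * (W w - Vf k w)\<^sup>2 \<partial>M))"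
      by (rule Bochner_Integration.integral_sum) (rule intA)
    also have "\<dots> \<le> (\<Sum>k\<in>K. \<delta>\<^sup>2 * measure M (A k))"
      by (rule sum_mono) (rule cellk)
    also have "\<dots> = \<delta>\<^sup>2" using sumA by (simp add: sum_distrib_left[symmetric])
    finally show ?thesis .
  qed
  have VG: "(\<integral>w. (V w - G w)\<^sup>2 \<partial>M) \<le> measure M Cr"
  proof -
    have "(\<integral>w. (V w - G w)\<^sup>2 \<partial>M) \<le> (\<integral>w. indicator Cr w \<partial>M)"
    proof (rule integral_mono)
      show "integrable M (\<lambda>w. (V w - G w)\<^sup>2)"
        by (rule bint[OF P]; (measurable)?) (rule bnd | assumption)+
      show "integrable M (indicator Cr :: 'w \<Rightarrow> real)"
        by (rule bint[OF P]; (measurable)?) (rule bnd | assumption)+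
      fix w assume w: "w \<in> space M"
      show "(V w - G w)\<^sup>2 \<le> indicator Cr w"
      proof (cases "C w = D w")
        case True then show ?thesis using Vpt[OF w] Gpt[OF w] by simp
      next
        case False
        then have "w \<in> Cr" using w by (simp add: Cr_def)
        moreover have "(V w - G w)\<^sup>2 \<le> 1" using bV[OF w] bG[OF w] by (simp add: abs_square_le_1 abs_le_iff)
        ultimately show ?thesis by simp
      qed
    qed
    then show ?thesis by simp
  qed
  have WG: "(\<integral>w. (W w - G w)\<^sup>2 \<partial>M) \<le> 2 * \<delta>\<^sup>2 + 2 * measure M Cr"
  proof -
    have i1: "integrable M (\<lambda>w. (W w - V w)\<^sup>2)" and i2: "integrable M (\<lambda>w. (V w - G w)\<^sup>2)"
      and i3: "integrable M (\<lambda>w. (W w - G w)\<^sup>2)"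
      by (rule bint[OF P]; (measurable)?; (rule bnd | assumption)+)+
    have "(\<integral>w. (W w - G w)\<^sup>2 \<partial>M) \<le> (\<integral>w. 2 * (W w - V w)\<^sup>2 + 2 * (V w - G w)\<^sup>2 \<partial>M)"
    proof (rule integral_mono[OF i3])
      show "integrable M (\<lambda>w. 2 * (W w - V w)\<^sup>2 + 2 * (V w - G w)\<^sup>2)" using i1 i2 by simp
      fix w
      have "0 \<le> ((W w - V w) - (V w - G w))\<^sup>2" by simp
      then show "(W w - G w)\<^sup>2 \<le> 2 * (W w - V w)\<^sup>2 + 2 * (V w - G w)\<^sup>2"
        by (simp add: power2_eq_square algebra_simps)
    qed
    also have "\<dots> = 2 * (\<integral>w. (W w - V w)\<^sup>2 \<partial>M) + 2 * (\<integral>w. (V w - G w)\<^sup>2 \<partial>M)"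
      using i1 i2 by simp
    finally show ?thesis using WV VG by linarith
  qed
  have ZGFp: "(\<lambda>w. Z w - G w) \<in> borel_measurable Fp"
    using meas_sub[OF sFtp _ Zm] meas_sub[OF sFtp _ GFt] by (simp add: Ft_def Fp_def)
  have ZGFt: "(\<lambda>w. Z w - G w) \<in> borel_measurable Ft"
    using Zm GFt by measurable
  have Weq: "\<And>w. cl (real_cond_exp M Fp Y w) = W w" by (simp add: W_def cexp_rv_def Fp_def)
  have Zeq: "\<And>w. cl (real_cond_exp M Ft Y w) = Z w" by (simp add: Z_def cexp_rv_def Ft_def)
  have O1: "(\<integral>w. (Z w - G w) * Y w \<partial>M) = (\<integral>w. (Z w - G w) * W w \<partial>M)"
  proof -
    have "(\<integral>w. (Z w - G w) * Y w \<partial>M) = (\<integral>w. (Z w - G w) * cl (real_cond_exp M Fp Y w) \<partial>M)"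
    proof (rule ceW(4)[where B=2])
      show "(\<lambda>w. Z w - G w) \<in> borel_measurable Fp" by (rule ZGFp)
      fix w assume "w \<in> space M" then show "\<bar>Z w - G w\<bar> \<le> 2" using abs_diff_le'[OF aZ aG] by simp
    qed auto
    then show ?thesis unfolding Weq .
  qed
  have O2: "(\<integral>w. (Z w - G w) * Y w \<partial>M) = (\<integral>w. (Z w - G w) * Z w \<partial>M)"
  proof -
    have "(\<integral>w. (Z w - G w) * Y w \<partial>M) = (\<integral>w. (Z w - G w) * cl (real_cond_exp M Ft Y w) \<partial>M)"
    proof (rule ceZ(4)[where B=2])
      show "(\<lambda>w. Z w - G w) \<in> borel_measurable Ft" by (rule ZGFt)
      fix w assume "w \<in> space M" then show "\<bar>Z w - G w\<bar> \<le> 2" using abs_diff_le'[OF aZ aG] by simp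
    qed auto
    then show ?thesis unfolding Zeq .
  qed
  have WZ: "(\<integral>w. (W w - Z w)\<^sup>2 \<partial>M) \<le> (\<integral>w. (W w - G w)\<^sup>2 \<partial>M)"
  proof -
    have j1: "integrable M (\<lambda>w. (W w - Z w)\<^sup>2)" and j2: "integrable M (\<lambda>w. (Z w - G w)\<^sup>2)"
      and j3: "integrable M (\<lambda>w. (Z w - G w) * W w)" and j4: "integrable M (\<lambda>w. (Z w - G w) * Z w)"
      by (rule bint[OF P]; (measurable)?; (rule bnd | assumption)+)+
    have "(\<integral>w. (W w - G w)\<^sup>2 \<partial>M) = (\<integral>w. (W w - Z w)\<^sup>2 + (Z w - G w)\<^sup>2 + 2 * ((Z w - G w) * W w) - 2 * ((Z w - G w) * Z w) \<partial>M)"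
      by (intro Bochner_Integration.integral_cong refl) (simp add: power2_eq_square algebra_simps)
    also have "\<dots> = (\<integral>w. (W w - Z w)\<^sup>2 \<partial>M) + (\<integral>w. (Z w - G w)\<^sup>2 \<partial>M)
          + 2 * (\<integral>w. (Z w - G w) * W w \<partial>M) - 2 * (\<integral>w. (Z w - G w) * Z w \<partial>M)"
      using j1 j2 j3 j4 by simp
    also have "\<dots> = (\<integral>w. (W w - Z w)\<^sup>2 \<partial>M) + (\<integral>w. (Z w - G w)\<^sup>2 \<partial>M)"
      using O1 O2 by simp
    also have "\<dots> \<ge> (\<integral>w. (W w - Z w)\<^sup>2 \<partial>M)" by simp
    finally show ?thesis .
  qed
  show ?thesis using WZ WG unfolding W_def Z_def Cr_def C_def D_def X_def by simp
qed

lemma count_cross_le: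
  fixes a b :: real and m :: nat
  assumes m: "m > 0" and ab: "a \<le> b"
  shows "real (card {r \<in> {..<m}. \<lfloor>a - real r / real m\<rfloor> \<noteq> \<lfloor>b - real r / real m\<rfloor>}) \<le> real m * (b - a) + 1"
proof -
  define R where "R = {r \<in> {..<m}. \<lfloor>a - real r / real m\<rfloor> \<noteq> \<lfloor>b - real r / real m\<rfloor>}"
  define j where "j = (\<lambda>r::nat. int m * \<lfloor>b - real r / real m\<rfloor> + int r)"
  have mpos: "real m > 0" using m by simp
  have jmod: "\<And>r. r < m \<Longrightarrow> j r mod int m = int r"
    unfolding j_def by (simp add: mod_pos_pos_trivial)
  have inj: "inj_on j R"
  proof (rule inj_onI)
    fix r1 r2 assume h: "r1 \<in> R" "r2 \<in> R" "j r1 = j r2"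
    have "r1 < m" "r2 < m" using h(1,2) by (simp_all add: R_def)
    then have "int r1 = j r1 mod int m" "int r2 = j r2 mod int m" using jmod by simp_all
    then have "int r1 = int r2" using h(3) by simp
    then show "r1 = r2" by simp
  qed
  have into: "j ` R \<subseteq> {\<lfloor>real m * a\<rfloor> + 1 .. \<lfloor>real m * b\<rfloor>}"
  proof
    fix y assume "y \<in> j ` R"
    then obtain r where r: "r \<in> R" and y: "y = j r" by auto
    define n where "n = \<lfloor>b - real r / real m\<rfloor>"
    have "\<lfloor>a - real r / real m\<rfloor> \<le> n" unfolding n_def using ab by (intro floor_mono) simp
    moreover have "\<lfloor>a - real r / real m\<rfloor> \<noteq> n" using r by (simp add: R_def n_def)
    ultimately have "\<lfloor>a - real r / real m\<rfloor> < n" by simp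
    then have "a - real r / real m < real_of_int n" by (simp add: floor_less_iff)
    then have "real m * a < real m * real_of_int n + real r"
      using mpos by (simp add: field_simps)
    then have "real m * a < real_of_int (int m * n + int r)" by simp
    then have "\<lfloor>real m * a\<rfloor> < int m * n + int r" by (simp only: floor_less_iff)
    then have lo: "\<lfloor>real m * a\<rfloor> + 1 \<le> int m * n + int r" by simp
    have "real_of_int n \<le> b - real r / real m" unfolding n_def by simp
    then have "real m * real_of_int n + real r \<le> real m * b"
      using mpos by (simp add: field_simps)
    then have hi: "int m * n + int r \<le> \<lfloor>real m * b\<rfloor>"
      by (simp add: le_floor_iff)
    show "y \<in> {\<lfloor>real m * a\<rfloor> + 1 .. \<lfloor>real m * b\<rfloor>}" using lo hi by (simp add: y j_def n_def)
  qed
  have "card R \<le> card {\<lfloor>real m * a\<rfloor> + 1 .. \<lfloor>real m * b\<rfloor>}"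
    using card_inj_on_le[OF inj into] by simp
  then have "real (card R) \<le> real (nat (\<lfloor>real m * b\<rfloor> - \<lfloor>real m * a\<rfloor>))" by simp
  also have "\<dots> \<le> real m * (b - a) + 1"
  proof -
    have "real_of_int \<lfloor>real m * b\<rfloor> \<le> real m * b" by simp
    moreover have "real m * a < real_of_int \<lfloor>real m * a\<rfloor> + 1" by simp
    moreover have "\<lfloor>real m * a\<rfloor> \<le> \<lfloor>real m * b\<rfloor>" using ab mpos by (intro floor_mono) simp
    then have "real (nat (\<lfloor>real m * b\<rfloor> - \<lfloor>real m * a\<rfloor>)) = real_of_int \<lfloor>real m * b\<rfloor> - real_of_int \<lfloor>real m * a\<rfloor>"
      by simp
    moreover have "real m * (b - a) = real m * b - real m * a" by (simp add: right_diff_distrib)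
    ultimately show ?thesis by linarith
  qed
  finally show ?thesis by (simp add: R_def)
qed

lemma count_cross:
  fixes a b :: real and m :: nat
  assumes m: "m > 0"
  shows "real (card {r \<in> {..<m}. \<lfloor>a - real r / real m\<rfloor> \<noteq> \<lfloor>b - real r / real m\<rfloor>}) \<le> real m * \<bar>a - b\<bar> + 1"
proof (cases "a \<le> b")
  case True then show ?thesis using count_cross_le[OF m True] by simp
next
  case False
  then have "b \<le> a" by simp
  from count_cross_le[OF m this] show ?thesis using False by (simp add: eq_commute)
qed

theorem lemma3p2:
  fixes M :: "'w measure" and SS :: "'s measure" and TT :: "'t measure"
    and sig :: "'w \<Rightarrow> 's" and tau :: "'w \<Rightarrow> 't" and Y :: "'w \<Rightarrow> real"
  assumes "prob_space M"
    and "sig \<in> M \<rightarrow>\<^sub>M SS" and "tau \<in> M \<rightarrow>\<^sub>M TT"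
    and "Y \<in> borel_measurable M"
    and "\<And>w. w \<in> space M \<Longrightarrow> 0 \<le> Y w \<and> Y w \<le> 1"
    and "rectangle_substitutes M SS TT sig tau Y"
  shows "(\<integral>w. (cexp_rv M (\<lambda>w. (sig w, tau w)) (SS \<Otimes>\<^sub>M TT) Y w - cexp_rv M tau TT Y w)\<^sup>2 \<partial>M)
           \<le> 6 * (\<integral>w. (cexp_rv M sig SS Y w - cexp_rv M tau TT Y w)\<^sup>2 \<partial>M) powr (1/3)"
proof -
  note P = assms(1) and sig = assms(2) and tau = assms(3) and Ym[measurable] = assms(4)
    and Yb = assms(5) and RS = assms(6)
  interpret prob_space M by (rule P)
  have pair: "(\<lambda>w. (sig w, tau w)) \<in> M \<rightarrow>\<^sub>M SS \<Otimes>\<^sub>M TT"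
    using sig tau by measurable
  define Xr where "Xr = cexp_rv M sig SS Y"
  define Zr where "Zr = cexp_rv M tau TT Y"
  define Wr where "Wr = cexp_rv M (\<lambda>w. (sig w, tau w)) (SS \<Otimes>\<^sub>M TT) Y"
  define X where "X = (\<lambda>w. cl (Xr w))"
  define Z where "Z = (\<lambda>w. cl (Zr w))"
  define W where "W = (\<lambda>w. cl (Wr w))"
  have XrM[measurable]: "Xr \<in> borel_measurable M" by (simp add: Xr_def cexp_rv_def)
  have ZrM[measurable]: "Zr \<in> borel_measurable M" by (simp add: Zr_def cexp_rv_def)
  have WrM[measurable]: "Wr \<in> borel_measurable M" by (simp add: Wr_def cexp_rv_def)
  have XM[measurable]: "X \<in> borel_measurable M" unfolding X_def by measurable
  have ZM[measurable]: "Z \<in> borel_measurable M" unfolding Z_def by measurable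
  have WM[measurable]: "W \<in> borel_measurable M" unfolding W_def by measurable
  have aeX: "AE w in M. Xr w = X w"
    using ce_basic(2)[OF P sig Ym Yb] by (simp add: X_def Xr_def cexp_rv_def)
  have aeZ: "AE w in M. Zr w = Z w"
    using ce_basic(2)[OF P tau Ym Yb] by (simp add: Z_def Zr_def cexp_rv_def)
  have aeW: "AE w in M. Wr w = W w"
    using ce_basic(2)[OF P pair Ym Yb] by (simp add: W_def Wr_def cexp_rv_def)
  define L where "L = (\<integral>w. (W w - Z w)\<^sup>2 \<partial>M)"
  define eps where "eps = (\<integral>w. (X w - Z w)\<^sup>2 \<partial>M)"
  define e1 where "e1 = (\<integral>w. \<bar>X w - Z w\<bar> \<partial>M)"
  have Leq: "(\<integral>w. (Wr w - Zr w)\<^sup>2 \<partial>M) = L"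
    unfolding L_def by (rule integral_cong_AE) (use aeW aeZ in auto)
  have epseq: "(\<integral>w. (Xr w - Zr w)\<^sup>2 \<partial>M) = eps"
    unfolding eps_def by (rule integral_cong_AE) (use aeX aeZ in auto)
  have aX: "\<And>w. \<bar>X w\<bar> \<le> 1" and aZ: "\<And>w. \<bar>Z w\<bar> \<le> 1" and aW: "\<And>w. \<bar>W w\<bar> \<le> 1"
    by (simp_all add: X_def Z_def W_def)
  note bnd = abs_mult_le' abs_diff_le' abs_add_le' abs_pow2_le' abs_ind_le' aX aZ aW
  have core': "\<And>\<delta> u. \<delta> > 0 \<Longrightarrow> L \<le> 2 * \<delta>\<^sup>2 + 2 * measure M {w \<in> space M. \<lfloor>(X w - u) / \<delta>\<rfloor> \<noteq> \<lfloor>(Z w - u) / \<delta>\<rfloor>}"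
    using core[OF P sig tau Ym Yb RS] unfolding L_def X_def Z_def W_def Xr_def Zr_def Wr_def by blast
  have iabs: "integrable M (\<lambda>w. \<bar>X w - Z w\<bar>)"
    by (rule bint[OF P, where B=2]; (measurable)?) (use abs_diff_le'[OF aX aZ] in simp)
  have avg: "\<And>\<delta> (m::nat). \<delta> > 0 \<Longrightarrow> m > 0 \<Longrightarrow> L \<le> 2 * \<delta>\<^sup>2 + 2 * (e1 / \<delta> + 1 / real m)"
  proof -
    fix \<delta> :: real and m :: nat assume d: "\<delta> > 0" and m: "m > 0"
    define cr where "cr = (\<lambda>r::nat. {w \<in> space M. \<lfloor>(X w - real r * \<delta> / real m) / \<delta>\<rfloor> \<noteq> \<lfloor>(Z w - real r * \<delta> / real m) / \<delta>\<rfloor>})"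
    have crM[measurable]: "\<And>r. cr r \<in> sets M" unfolding cr_def by measurable
    have shift: "\<And>x r. (x - real r * \<delta> / real m) / \<delta> = x / \<delta> - real r / real m"
      using d by (simp add: field_simps)
    have pt: "\<And>w. w \<in> space M \<Longrightarrow> (\<Sum>r<m. indicator (cr r) w) \<le> real m / \<delta> * \<bar>X w - Z w\<bar> + 1"
    proof -
      fix w assume w: "w \<in> space M"
      have "(\<Sum>r<m. indicator (cr r) w :: real)
          = (\<Sum>r\<in>{..<m}. if \<lfloor>X w / \<delta> - real r / real m\<rfloor> \<noteq> \<lfloor>Z w / \<delta> - real r / real m\<rfloor> then 1 else 0)"
        by (intro sum.cong refl) (simp add: cr_def shift w split: split_indicator)
      also have "\<dots> = real (card {r \<in> {..<m}. \<lfloor>X w / \<delta> - real r / real m\<rfloor> \<noteq> \<lfloor>Z w / \<delta> - real r / real m\<rfloor>})"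
        by (simp add: sum.inter_filter[symmetric])
      also have "\<dots> \<le> real m * \<bar>X w / \<delta> - Z w / \<delta>\<bar> + 1" by (rule count_cross[OF m])
      also have "\<bar>X w / \<delta> - Z w / \<delta>\<bar> = \<bar>X w - Z w\<bar> / \<delta>"
        using d by (simp add: diff_divide_distrib[symmetric])
      finally show "(\<Sum>r<m. indicator (cr r) w) \<le> real m / \<delta> * \<bar>X w - Z w\<bar> + 1" by simp
    qed
    have iind: "\<And>r. integrable M (indicator (cr r) :: 'w \<Rightarrow> real)"
      by (rule bint[OF P, where B=1]) (simp_all add: abs_ind_le')
    have isum: "integrable M (\<lambda>w. \<Sum>r<m. indicator (cr r) w :: real)"
      by (rule Bochner_Integration.integrable_sum) (rule iind)
    have "(\<Sum>r<m. measure M (cr r)) = (\<integral>w. (\<Sum>r<m. indicator (cr r) w) \<partial>M)"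
      by (subst Bochner_Integration.integral_sum) (auto intro!: bint[OF P] simp: abs_ind_le')
    also have "\<dots> \<le> (\<integral>w. real m / \<delta> * \<bar>X w - Z w\<bar> + 1 \<partial>M)"
      by (rule integral_mono) (use pt iabs isum in auto)
    also have "\<dots> = real m / \<delta> * e1 + 1"
      using iabs by (simp add: e1_def prob_space)
    finally have sumle: "(\<Sum>r<m. measure M (cr r)) \<le> real m / \<delta> * e1 + 1" .
    have "\<exists>r<m. measure M (cr r) \<le> e1 / \<delta> + 1 / real m"
    proof (rule ccontr)
      assume "\<not> ?thesis"
      then have gt: "\<And>r. r < m \<Longrightarrow> measure M (cr r) > e1 / \<delta> + 1 / real m" by auto
      have "(\<Sum>r<m. e1 / \<delta> + 1 / real m) < (\<Sum>r<m. measure M (cr r))"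
        using m by (intro sum_strict_mono) (auto intro: gt)
      also have "(\<Sum>r<m. e1 / \<delta> + 1 / real m) = real m / \<delta> * e1 + 1"
        using m by (simp add: field_simps)
      finally show False using sumle by simp
    qed
    then obtain r where "r < m" and rle: "measure M (cr r) \<le> e1 / \<delta> + 1 / real m" by auto
    have "L \<le> 2 * \<delta>\<^sup>2 + 2 * measure M (cr r)"
      using core'[OF d, of "real r * \<delta> / real m"] by (simp add: cr_def)
    then show "L \<le> 2 * \<delta>\<^sup>2 + 2 * (e1 / \<delta> + 1 / real m)" using rle by (smt (verit))
  qed
  have avg2: "\<And>\<delta>. \<delta> > 0 \<Longrightarrow> L \<le> 2 * \<delta>\<^sup>2 + 2 * (e1 / \<delta>)"
  proof (rule ccontr)
    fix \<delta> :: real assume d: "\<delta> > 0" and nle: "\<not> L \<le> 2 * \<delta>\<^sup>2 + 2 * (e1 / \<delta>)"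
    define g where "g = L - (2 * \<delta>\<^sup>2 + 2 * (e1 / \<delta>))"
    have g: "g > 0" using nle by (simp add: g_def)
    obtain m :: nat where m: "2 / g < real m" using reals_Archimedean2 by blast
    have mpos: "m > 0" using m g by (cases m) (auto simp: divide_pos_pos not_less)
    have "2 / real m < g" using m g mpos by (simp add: field_simps)
    with avg[OF d mpos] show False by (simp add: g_def field_simps)
  qed
  have eps0: "eps \<ge> 0" unfolding eps_def by simp
  have e10: "e1 \<ge> 0" unfolding e1_def by simp
  have cs: "e1 \<le> sqrt eps"
  proof -
    have isq: "integrable M (\<lambda>w. (X w - Z w)\<^sup>2)"
      by (rule bint[OF P]; (measurable)?) (rule bnd | assumption)+
    have "0 \<le> (\<integral>w. (\<bar>X w - Z w\<bar> - e1)\<^sup>2 \<partial>M)" by simp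
    also have "(\<integral>w. (\<bar>X w - Z w\<bar> - e1)\<^sup>2 \<partial>M) = (\<integral>w. (X w - Z w)\<^sup>2 - 2 * e1 * \<bar>X w - Z w\<bar> + e1\<^sup>2 \<partial>M)"
      by (intro Bochner_Integration.integral_cong refl) (simp add: power2_eq_square algebra_simps)
    also have "\<dots> = eps - 2 * e1 * e1 + e1\<^sup>2"
      using isq iabs by (simp add: eps_def e1_def prob_space)
    finally have "e1\<^sup>2 \<le> eps" by (simp add: power2_eq_square)
    then show ?thesis by (rule real_le_rsqrt)
  qed
  have main: "\<And>\<delta>. \<delta> > 0 \<Longrightarrow> L \<le> 2 * \<delta>\<^sup>2 + 2 * (sqrt eps / \<delta>)"
  proof -
    fix \<delta> :: real assume d: "\<delta> > 0"
    have "e1 / \<delta> \<le> sqrt eps / \<delta>" using cs d by (simp add: divide_right_mono)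
    then show "L \<le> 2 * \<delta>\<^sup>2 + 2 * (sqrt eps / \<delta>)" using avg2[OF d] by linarith
  qed
  have L0: "L \<ge> 0" unfolding L_def by simp
  have "L \<le> 6 * eps powr (1/3)"
  proof (cases "eps = 0")
    case True
    have "L \<le> 0"
    proof (rule ccontr)
      assume "\<not> L \<le> 0"
      then have Lp: "L > 0" by simp
      define \<delta> where "\<delta> = sqrt (L / 4)"
      have d: "\<delta> > 0" using Lp by (simp add: \<delta>_def)
      have "\<delta>\<^sup>2 = L / 4" using Lp by (simp add: \<delta>_def)
      then show False using main[OF d] True Lp by simp
    qed
    then show ?thesis using True by simp
  next
    case False
    then have ep: "eps > 0" using eps0 by simp
    define \<delta> where "\<delta> = eps powr (1/6)"
    have d: "\<delta> > 0" using ep by (simp add: \<delta>_def)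
    have d2: "\<delta>\<^sup>2 = eps powr (1/3)"
      unfolding \<delta>_def power2_eq_square by (simp add: powr_add[symmetric])
    have sq: "sqrt eps / \<delta> = eps powr (1/3)"
    proof -
      have "sqrt eps = eps powr (1/2)" using ep by (simp add: powr_half_sqrt)
      moreover have "eps powr (1/2 - 1/6) = eps powr (1/2) / eps powr (1/6)" by (rule powr_diff)
      moreover have "(1/2 - 1/6 :: real) = 1/3" by simp
      ultimately show ?thesis by (simp add: \<delta>_def)
    qed
    have "L \<le> 4 * eps powr (1/3)" using main[OF d] d2 sq by simp
    also have "\<dots> \<le> 6 * eps powr (1/3)" by simp
    finally show ?thesis .
  qed
  then show ?thesis using Leq epseq by (simp add: Wr_def Zr_def Xr_def)
qed

end
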